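(* Let $\mathfrak{G}$ be a CFSTR and let $G$ be its non-flow subnetwork. The following are equivalent: (1) $\mathfrak{G}$ passes the Jacobian Criterion; (2) every square embedded network of $G$ has nonnegative orientation; (3) $G$ has no self-catalyzing reaction, and every square embedded network $N$ of $G$ satisfying both of the following has nonnegative orientation: (a) $N$ contains no outflow reaction $X_i\to0$, no inflow reaction $0\to X_i$, no generalized inflow reaction $0\to\sum_i a_iX_i$ ($a_i\ge0$), and no reaction of the form $aX_i\to bX_i$ with $0\le b\le a$; (b) each species of $N$ appears in at least two reactions of $N$, where a reaction together with its reverse is counted only once.
   Context: A chemical reaction network has species $X_1,\dots,X_s$ and reactions $y\to y'$ with complexes $y,y'\in\mathbb{Z}_{\ge0}^s$, $y\ne y'$; $y_i$ is the stoichiometric coefficient of $X_i$ in $y$. A flow reaction is $0\to X_i$ (inflow) or $X_i\to0$ (outflow); other reactions are non-flow. A CFSTR contains the outflow $X_i\to0$ for every species; its non-flow subnetwork consists of all its non-flow reactions. A reaction $y\to y'$ is self-catalyzing if some species $X_j$ has $1\le y_j<y'_j$. Square networks: for a list of $n$ reactions $y_k\to y_k'$ on $n$ species, the reactant matrix $M$ has $k$-th row $y_k$, the reaction matrix $R$ has $k$-th row $y_k-y_k'$, and the orientation is $\operatorname{Or}=\operatorname{sign}(\det M\det R)$; the empty network has orientation $+1$. Square embedded networks: for $0\le k\le s$, a $k$-square embedded network of $G$ is determined by a $k$-element set $S$ of species and a $k$-element set of non-flow reactions of $G$; it is the square network with species set $S$ whose $k$ reactions are obtained from the chosen reactions by deleting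 from both complexes all species not in $S$ (kept as a list, so repeated reactions may occur). Jacobian Criterion: a CFSTR with $s$ species passes it if for every choice of $s$ distinct reactions, none an inflow, the $s\times s$ reactant and reaction matrices of these reactions (columns indexed by all species) give nonnegative orientation. *)

theory Defs
  imports "Jordan_Normal_Form.Determinant"
begin

text \<open>Species are indexed by natural numbers; a network on s species uses
indices 0..s-1. A complex is a function from species indices to
stoichiometric coefficients; a reaction is a pair (reactant, product).\<close>

type_synonym cplx = "nat \<Rightarrow> nat"
type_synonym reaction = "cplx \<times> cplx"

definition zero_cplx :: cplx where "zero_cplx = (\<lambda>_. 0)"

definition unit_cplx :: "nat \<Rightarrow> cplx" where
  "unit_cplx i = (\<lambda>j. if j = i then 1 else 0)"

definition is_inflow :: "reaction \<Rightarrow> bool" where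
  "is_inflow r \<longleftrightarrow> (\<exists>i. r = (zero_cplx, unit_cplx i))"

definition is_outflow :: "reaction \<Rightarrow> bool" where
  "is_outflow r \<longleftrightarrow> (\<exists>i. r = (unit_cplx i, zero_cplx))"

definition is_flow :: "reaction \<Rightarrow> bool" where
  "is_flow r \<longleftrightarrow> is_inflow r \<or> is_outflow r"

definition reaction_network :: "nat \<Rightarrow> reaction set \<Rightarrow> bool" where
  "reaction_network s R \<longleftrightarrow> finite R \<and>
     (\<forall>r\<in>R. fst r \<noteq> snd r \<and> (\<forall>j. s \<le> j \<longrightarrow> fst r j = 0 \<and> snd r j = 0))"

definition CFSTR :: "nat \<Rightarrow> reaction set \<Rightarrow> bool" where
  "CFSTR s R \<longleftrightarrow> reaction_network s R \<and> (\<forall>i<s. (unit_cplx i, zero_cplx) \<in> R)"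

definition nonflow_subnetwork :: "reaction set \<Rightarrow> reaction set" where
  "nonflow_subnetwork R = {r \<in> R. \<not> is_flow r}"

definition self_catalyzing :: "reaction \<Rightarrow> bool" where
  "self_catalyzing r \<longleftrightarrow> (\<exists>j. 1 \<le> fst r j \<and> fst r j < snd r j)"

definition reactant_matrix :: "nat list \<Rightarrow> reaction list \<Rightarrow> int mat" where
  "reactant_matrix sp rs = mat (length rs) (length sp)
      (\<lambda>(a, b). int (fst (rs ! a) (sp ! b)))"

definition reaction_matrix :: "nat list \<Rightarrow> reaction list \<Rightarrow> int mat" where
  "reaction_matrix sp rs = mat (length rs) (length sp)
      (\<lambda>(a, b). int (fst (rs ! a) (sp ! b)) - int (snd (rs ! a) (sp ! b)))"

definition orientation :: "nat list \<Rightarrow> reaction list \<Rightarrow> int" where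
  "orientation sp rs = sgn (det (reactant_matrix sp rs) * det (reaction_matrix sp rs))"

definition jacobian_criterion :: "nat \<Rightarrow> reaction set \<Rightarrow> bool" where
  "jacobian_criterion s R \<longleftrightarrow>
     (\<forall>rs. distinct rs \<and> length rs = s \<and> set rs \<subseteq> R \<and> (\<forall>r\<in>set rs. \<not> is_inflow r)
        \<longrightarrow> orientation [0..<s] rs \<ge> 0)"

definition restrict_reaction :: "nat set \<Rightarrow> reaction \<Rightarrow> reaction" where
  "restrict_reaction S r =
     ((\<lambda>j. if j \<in> S then fst r j else 0), (\<lambda>j. if j \<in> S then snd r j else 0))"

text \<open>Data determining a square embedded network of G (on s species):
a species set S and a list of card S distinct reactions of G.\<close>
definition sq_embedded_data :: "nat \<Rightarrow> reaction set \<Rightarrow> nat set \<Rightarrow> reaction list \<Rightarrow> bool" where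
  "sq_embedded_data s G S rs \<longleftrightarrow>
     S \<subseteq> {..<s} \<and> distinct rs \<and> set rs \<subseteq> G \<and> length rs = card S"

definition emb_reactions :: "nat set \<Rightarrow> reaction list \<Rightarrow> reaction list" where
  "emb_reactions S rs = map (restrict_reaction S) rs"

definition emb_orientation :: "nat set \<Rightarrow> reaction list \<Rightarrow> int" where
  "emb_orientation S rs = orientation (sorted_list_of_set S) (emb_reactions S rs)"

definition is_gen_inflow :: "reaction \<Rightarrow> bool" where
  "is_gen_inflow r \<longleftrightarrow> fst r = zero_cplx"

definition is_mono_degradation :: "reaction \<Rightarrow> bool" where
  "is_mono_degradation r \<longleftrightarrow> (\<exists>i a b. b \<le> a \<and>
      fst r = (\<lambda>j. if j = i then a else 0) \<and> snd r = (\<lambda>j. if j = i then b else 0))"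

definition cond_a :: "reaction list \<Rightarrow> bool" where
  "cond_a N \<longleftrightarrow> (\<forall>r\<in>set N. \<not> is_outflow r \<and> \<not> is_inflow r \<and>
      \<not> is_gen_inflow r \<and> \<not> is_mono_degradation r)"

text \<open>Condition (b): each species of N occurs in at least two reactions of N,
a reaction and its reverse counted once (reactions identified with the
unordered pair of their complexes).\<close>
definition cond_b :: "nat set \<Rightarrow> reaction list \<Rightarrow> bool" where
  "cond_b S N \<longleftrightarrow> (\<forall>i\<in>S.
      2 \<le> card {{fst r, snd r} | r. r \<in> set N \<and> (0 < fst r i \<or> 0 < snd r i)})"

end

theory Submission
  imports Defs
begin

definition del :: "nat \<Rightarrow> 'a list \<Rightarrow> 'a list" where
  "del k xs = take k xs @ drop (Suc k) xs"

lemma del_nth: "k < length xs \<Longrightarrow> i < length xs - 1 \<Longrightarrow>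
   del k xs ! i = xs ! (if i < k then i else Suc i)"
  unfolding del_def by (auto simp: nth_append min_def)

lemma length_del[simp]: "k < length xs \<Longrightarrow> length (del k xs) = length xs - 1"
  unfolding del_def by auto

lemma del_filter: "distinct xs \<Longrightarrow> c < length xs \<Longrightarrow> del c xs = filter (\<lambda>x. x \<noteq> xs ! c) xs"
proof (induction xs arbitrary: c)
  case Nil then show ?case by simp
next
  case (Cons a xs)
  show ?case
  proof (cases c)
    case 0
    have "a \<notin> set xs" using Cons.prems by simp
    then have "filter (\<lambda>x. x \<noteq> a) xs = xs" by (auto intro: filter_True)
    then show ?thesis using 0 by (simp add: del_def)
  next
    case (Suc c')
    have c': "c' < length xs" using Cons.prems Suc by simp
    then have "xs ! c' \<in> set xs" by simp
    then have "a \<noteq> xs ! c'" using Cons.prems by auto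
    moreover have "del c' xs = filter (\<lambda>x. x \<noteq> xs ! c') xs" using Cons.IH Cons.prems c' by simp
    ultimately show ?thesis using Suc by (simp add: del_def)
  qed
qed

lemma del_append: "del (length xs) (xs @ y # ys) = xs @ ys"
  unfolding del_def by simp

lemma distinct_del: "distinct xs \<Longrightarrow> distinct (del k xs)"
  unfolding del_def using set_take_disj_set_drop_if_distinct[of xs k "Suc k"] by auto

lemma set_del_subset: "set (del k xs) \<subseteq> set xs"
  unfolding del_def using set_take_subset set_drop_subset by fastforce

lemma sorted_list_of_set_id: "sorted xs \<Longrightarrow> distinct xs \<Longrightarrow> sorted_list_of_set (set xs) = xs"
  by (simp add: sorted_list_of_set_sort_remdups distinct_remdups_id sorted_sort_id)

lemma reactant_carrier: "reactant_matrix sp rs \<in> carrier_mat (length rs) (length sp)"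
  unfolding reactant_matrix_def by simp

lemma reaction_carrier: "reaction_matrix sp rs \<in> carrier_mat (length rs) (length sp)"
  unfolding reaction_matrix_def by simp

lemma delete_reactant: "k < length rs \<Longrightarrow> c < length sp \<Longrightarrow>
  mat_delete (reactant_matrix sp rs) k c = reactant_matrix (del c sp) (del k rs)"
  unfolding mat_delete_def reactant_matrix_def
  by (rule eq_matI) (auto simp: del_nth)

lemma delete_reaction: "k < length rs \<Longrightarrow> c < length sp \<Longrightarrow>
  mat_delete (reaction_matrix sp rs) k c = reaction_matrix (del c sp) (del k rs)"
  unfolding mat_delete_def reaction_matrix_def
  by (rule eq_matI) (auto simp: del_nth)

lemma det_row_single:
  assumes A: "(A :: int mat) \<in> carrier_mat n n" and k: "k < n" and c: "c < n"
    and row: "\<And>j. j < n \<Longrightarrow> A $$ (k,j) = (if j = c then a else 0)"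
  shows "det A = a * cofactor A k c"
proof -
  have "det A = (\<Sum>j<n. A $$ (k,j) * cofactor A k j)" by (rule laplace_expansion_row[OF A k])
  also have "\<dots> = (\<Sum>j<n. if j = c then a * cofactor A k c else 0)"
    by (rule sum.cong) (auto simp: row)
  also have "\<dots> = a * cofactor A k c" using c by simp
  finally show ?thesis .
qed

lemma det_col_single:
  assumes A: "(A :: int mat) \<in> carrier_mat n n" and k: "k < n" and c: "c < n"
    and col: "\<And>i. i < n \<Longrightarrow> A $$ (i,c) = (if i = k then a else 0)"
  shows "det A = a * cofactor A k c"
proof -
  have "det A = (\<Sum>i<n. A $$ (i,c) * cofactor A i c)" by (rule laplace_expansion_column[OF A c])
  also have "\<dots> = (\<Sum>i<n. if i = k then a * cofactor A k c else 0)"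
    by (rule sum.cong) (auto simp: col)
  also have "\<dots> = a * cofactor A k c" using k by simp
  finally show ?thesis .
qed


lemma sgn_sq_neg1: "((-1::int)^m) * ((-1)^m) = 1"
  by (simp flip: power_mult_distrib)

lemma orient_row:
  assumes len: "length sp = n" "length rs = n" and k: "k < n" and c: "c < n"
   and f: "\<And>b. b < n \<Longrightarrow> fst (rs!k) (sp!b) = (if b = c then a else 0)"
   and g: "\<And>b. b < n \<Longrightarrow> snd (rs!k) (sp!b) = (if b = c then a' else 0)"
  shows "orientation sp rs = sgn (int a * (int a - int a')) * orientation (del c sp) (del k rs)"
proof -
  let ?M = "reactant_matrix sp rs" let ?R = "reaction_matrix sp rs"
  have M: "?M \<in> carrier_mat n n" using reactant_carrier len by metis
  have R: "?R \<in> carrier_mat n n" using reaction_carrier len by metis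
  have dM: "det ?M = int a * cofactor ?M k c"
    by (rule det_row_single[OF M k c]) (use f len k in \<open>auto simp: reactant_matrix_def\<close>)
  have dR: "det ?R = (int a - int a') * cofactor ?R k c"
    by (rule det_row_single[OF R k c]) (use f g len k in \<open>auto simp: reaction_matrix_def\<close>)
  have cM: "cofactor ?M k c = (-1)^(k+c) * det (reactant_matrix (del c sp) (del k rs))"
    unfolding cofactor_def using delete_reactant k c len by simp
  have cR: "cofactor ?R k c = (-1)^(k+c) * det (reaction_matrix (del c sp) (del k rs))"
    unfolding cofactor_def using delete_reaction k c len by simp
  show ?thesis unfolding orientation_def dM dR cM cR
  proof -
    let ?s = "(-1::int)^(k+c)"
    let ?x = "det (reactant_matrix (del c sp) (del k rs))"
    let ?y = "det (reaction_matrix (del c sp) (del k rs))"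
    have "int a * (?s * ?x) * ((int a - int a') * (?s * ?y))
        = (int a * (int a - int a')) * (?s * ?s) * (?x * ?y)" by (simp add: algebra_simps)
    also have "\<dots> = (int a * (int a - int a')) * (?x * ?y)" by (simp only: sgn_sq_neg1)
    finally show "sgn (int a * (?s * ?x) * ((int a - int a') * (?s * ?y)))
        = sgn (int a * (int a - int a')) * sgn (?x * ?y)" by (simp add: sgn_mult)
  qed
qed

lemma orient_col:
  assumes len: "length sp = n" "length rs = n" and k: "k < n" and c: "c < n"
   and f: "\<And>b. b < n \<Longrightarrow> b \<noteq> k \<Longrightarrow> fst (rs!b) (sp!c) = 0 \<and> snd (rs!b) (sp!c) = 0"
  shows "orientation sp rs = sgn (int (fst (rs!k) (sp!c)) * (int (fst (rs!k) (sp!c)) - int (snd (rs!k) (sp!c))))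
     * orientation (del c sp) (del k rs)"
proof -
  let ?M = "reactant_matrix sp rs" let ?R = "reaction_matrix sp rs"
  let ?a = "fst (rs!k) (sp!c)" let ?a' = "snd (rs!k) (sp!c)"
  have M: "?M \<in> carrier_mat n n" using reactant_carrier len by metis
  have R: "?R \<in> carrier_mat n n" using reaction_carrier len by metis
  have dM: "det ?M = int ?a * cofactor ?M k c"
    by (rule det_col_single[OF M k c]) (use f len c in \<open>auto simp: reactant_matrix_def\<close>)
  have dR: "det ?R = (int ?a - int ?a') * cofactor ?R k c"
    by (rule det_col_single[OF R k c]) (use f len c in \<open>auto simp: reaction_matrix_def\<close>)
  have cM: "cofactor ?M k c = (-1)^(k+c) * det (reactant_matrix (del c sp) (del k rs))"
    unfolding cofactor_def using delete_reactant k c len by simp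
  have cR: "cofactor ?R k c = (-1)^(k+c) * det (reaction_matrix (del c sp) (del k rs))"
    unfolding cofactor_def using delete_reaction k c len by simp
  show ?thesis unfolding orientation_def dM dR cM cR
  proof -
    let ?s = "(-1::int)^(k+c)"
    let ?x = "det (reactant_matrix (del c sp) (del k rs))"
    let ?y = "det (reaction_matrix (del c sp) (del k rs))"
    have "int ?a * (?s * ?x) * ((int ?a - int ?a') * (?s * ?y))
        = (int ?a * (int ?a - int ?a')) * (?s * ?s) * (?x * ?y)" by (simp add: algebra_simps)
    also have "\<dots> = (int ?a * (int ?a - int ?a')) * (?x * ?y)" by (simp only: sgn_sq_neg1)
    finally show "sgn (int ?a * (?s * ?x) * ((int ?a - int ?a') * (?s * ?y)))
        = sgn (int ?a * (int ?a - int ?a')) * sgn (?x * ?y)" by (simp add: sgn_mult)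
  qed
qed

lemma orient_zero_row:
  assumes len: "length sp = n" "length rs = n" and k: "k < n"
   and f: "\<And>b. b < n \<Longrightarrow> fst (rs!k) (sp!b) = 0"
  shows "orientation sp rs = 0"
proof -
  let ?M = "reactant_matrix sp rs"
  have M: "?M \<in> carrier_mat n n" using reactant_carrier len by metis
  have "det ?M = 0 * cofactor ?M k 0"
    by (rule det_row_single[OF M k]) (use f len k in \<open>auto simp: reactant_matrix_def\<close>)
  then show ?thesis unfolding orientation_def by simp
qed

lemma orient_zero_col:
  assumes len: "length sp = n" "length rs = n" and c: "c < n"
   and f: "\<And>b. b < n \<Longrightarrow> fst (rs!b) (sp!c) = 0"
  shows "orientation sp rs = 0"
proof -
  let ?M = "reactant_matrix sp rs"
  have M: "?M \<in> carrier_mat n n" using reactant_carrier len by metis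
  have "det ?M = 0 * cofactor ?M 0 c"
    by (rule det_col_single[OF M _ c]) (use f len c in \<open>auto simp: reactant_matrix_def\<close>)
  then show ?thesis unfolding orientation_def by simp
qed

lemma orient_eq_rows:
  assumes len: "length sp = n" "length rs = n" and k: "k1 < n" "k2 < n" "k1 \<noteq> k2"
   and f: "\<And>b. b < n \<Longrightarrow> fst (rs!k1) (sp!b) = fst (rs!k2) (sp!b)"
  shows "orientation sp rs = 0"
proof -
  let ?M = "reactant_matrix sp rs"
  have M: "?M \<in> carrier_mat n n" using reactant_carrier len by metis
  have "row ?M k1 = row ?M k2"
    by (rule eq_vecI) (use f len k in \<open>auto simp: reactant_matrix_def\<close>)
  then have "det ?M = 0" using det_identical_rows[OF M k(3) k(1) k(2)] by simp
  then show ?thesis unfolding orientation_def by simp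
qed

lemma orient_rev_rows:
  assumes len: "length sp = n" "length rs = n" and k: "k1 < n" "k2 < n" "k1 \<noteq> k2"
   and f: "\<And>b. b < n \<Longrightarrow> fst (rs!k1) (sp!b) = snd (rs!k2) (sp!b)"
   and g: "\<And>b. b < n \<Longrightarrow> snd (rs!k1) (sp!b) = fst (rs!k2) (sp!b)"
  shows "orientation sp rs = 0"
proof -
  let ?R = "reaction_matrix sp rs"
  let ?R' = "multrow k2 (-1) ?R"
  have R: "?R \<in> carrier_mat n n" using reaction_carrier len by metis
  have R': "?R' \<in> carrier_mat n n" using R by (simp add: mat_multrow_def)
  have "row ?R' k1 = row ?R' k2"
    by (rule eq_vecI) (use f g len k in \<open>auto simp: reaction_matrix_def mat_multrow_def\<close>)
  then have "det ?R' = 0" using det_identical_rows[OF R' k(3) k(1) k(2)] by simp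
  moreover have "det ?R' = -1 * det ?R" using det_multrow[OF k(2) R] by simp
  ultimately have "det ?R = 0" by simp
  then show ?thesis unfolding orientation_def by simp
qed


lemma sorted_filter': "sorted xs \<Longrightarrow> sorted (filter P xs)"
  by (induction xs) auto

lemma sgn_nonneg_mult: "0 \<le> (x::int) \<Longrightarrow> 0 \<le> y \<Longrightarrow> 0 \<le> sgn x * y"
  by (simp add: sgn_if)

lemma restrict_fst: "j \<in> S \<Longrightarrow> fst (restrict_reaction S r) j = fst r j"
  by (simp add: restrict_reaction_def)

lemma restrict_snd: "j \<in> S \<Longrightarrow> snd (restrict_reaction S r) j = snd r j"
  by (simp add: restrict_reaction_def)

lemma orient_restrict:
  assumes "set sp \<subseteq> S"
  shows "orientation sp (map (restrict_reaction S) rs) = orientation sp rs"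
proof -
  have S: "\<And>j. j < length sp \<Longrightarrow> sp ! j \<in> S" using assms nth_mem by blast
  have 1: "reactant_matrix sp (map (restrict_reaction S) rs) = reactant_matrix sp rs"
    by (rule eq_matI) (use S in \<open>auto simp: reactant_matrix_def restrict_reaction_def\<close>)
  have 2: "reaction_matrix sp (map (restrict_reaction S) rs) = reaction_matrix sp rs"
    by (rule eq_matI) (use S in \<open>auto simp: reaction_matrix_def restrict_reaction_def\<close>)
  show ?thesis unfolding orientation_def 1 2 ..
qed

lemma emb_orientation_eq: "finite S \<Longrightarrow> emb_orientation S rs = orientation (sorted_list_of_set S) rs"
  unfolding emb_orientation_def emb_reactions_def
  by (rule orient_restrict) simp

lemma unit_cplx_at: "unit_cplx i j = (if j = i then 1 else 0)"
  by (simp add: unit_cplx_def)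

lemma unit_cplx_inj: "unit_cplx a = unit_cplx b \<Longrightarrow> a = b"
  unfolding unit_cplx_def by (metis one_neq_zero)

lemma unit_ne_zero: "unit_cplx t \<noteq> zero_cplx"
  unfolding unit_cplx_def zero_cplx_def by (metis one_neq_zero)

lemma nth_distinct_if: "distinct sp \<Longrightarrow> b < length sp \<Longrightarrow> c < length sp \<Longrightarrow>
   (sp ! b = sp ! c) = (b = c)"
  by (simp add: nth_eq_iff_index_eq)

lemma expand_outflows:
  "distinct T \<Longrightarrow> set T \<subseteq> set sp \<Longrightarrow> distinct sp \<Longrightarrow> length sp = length rs + length T \<Longrightarrow>
   orientation sp (rs @ map (\<lambda>t. (unit_cplx t, zero_cplx)) T) = orientation (filter (\<lambda>x. x \<notin> set T) sp) rs"
proof (induction T arbitrary: sp)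
  case Nil
  then show ?case by simp
next
  case (Cons t T)
  let ?out = "\<lambda>t. (unit_cplx t, zero_cplx)"
  let ?rs = "rs @ ?out t # map ?out T"
  have "t \<in> set sp" using Cons.prems by simp
  then obtain c where c: "c < length sp" "sp ! c = t" by (meson in_set_conv_nth)
  have k: "length rs < length sp" using Cons.prems by simp
  have "orientation sp ?rs = sgn (int 1 * (int 1 - int 0)) * orientation (del c sp) (del (length rs) ?rs)"
  proof (rule orient_row[where n = "length sp"])
    show "length ?rs = length sp" using Cons.prems by simp
    fix b assume b: "b < length sp"
    show "fst (?rs ! length rs) (sp ! b) = (if b = c then 1 else 0)"
      using b c Cons.prems(3) by (auto simp: unit_cplx_at nth_distinct_if)
    show "snd (?rs ! length rs) (sp ! b) = (if b = c then 0 else 0)"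
      by (simp add: zero_cplx_def)
  qed (use c k in auto)
  also have "\<dots> = orientation (filter (\<lambda>x. x \<noteq> t) sp) (rs @ map ?out T)"
    using del_append[of rs "?out t" "map ?out T"] del_filter[OF Cons.prems(3) c(1)] c by simp
  also have "\<dots> = orientation (filter (\<lambda>x. x \<notin> set T) (filter (\<lambda>x. x \<noteq> t) sp)) rs"
  proof (rule Cons.IH)
    show "distinct T" using Cons.prems by simp
    show "set T \<subseteq> set (filter (\<lambda>x. x \<noteq> t) sp)" using Cons.prems by auto
    show "distinct (filter (\<lambda>x. x \<noteq> t) sp)" using Cons.prems by simp
    have "length (filter (\<lambda>x. x \<noteq> t) sp) = length sp - 1"
      using del_filter[OF Cons.prems(3) c(1)] c length_del[of c sp] by simp
    then show "length (filter (\<lambda>x. x \<noteq> t) sp) = length rs + length T" using Cons.prems by simp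
  qed
  also have "filter (\<lambda>x. x \<notin> set T) (filter (\<lambda>x. x \<noteq> t) sp) = filter (\<lambda>x. x \<notin> set (t # T)) sp"
    by (induction sp) auto
  finally show ?case by simp
qed

lemma emb_from_jac:
  assumes C: "CFSTR s R" and J: "jacobian_criterion s R"
    and D: "sq_embedded_data s (nonflow_subnetwork R) S rs"
  shows "emb_orientation S rs \<ge> 0"
proof -
  let ?out = "\<lambda>t. (unit_cplx t, zero_cplx)"
  define T where "T = filter (\<lambda>i. i \<notin> S) [0..<s]"
  define full where "full = rs @ map ?out T"
  have Ss: "S \<subseteq> {..<s}" and dr: "distinct rs" and rG: "set rs \<subseteq> nonflow_subnetwork R"
    and lr: "length rs = card S" using D unfolding sq_embedded_data_def by auto
  have fS: "finite S" using Ss finite_subset by blast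
  have sl: "sorted_list_of_set S = filter (\<lambda>i. i \<in> S) [0..<s]"
  proof -
    have "set (filter (\<lambda>i. i \<in> S) [0..<s]) = S" using Ss by auto
    moreover have "sorted_list_of_set (set (filter (\<lambda>i. i \<in> S) [0..<s])) = filter (\<lambda>i. i \<in> S) [0..<s]"
      by (rule sorted_list_of_set_id) (auto intro: sorted_filter')
    ultimately show ?thesis by simp
  qed
  have lT: "length rs + length T = s"
  proof -
    have "length (filter (\<lambda>i. i \<in> S) [0..<s]) + length T = s"
      unfolding T_def using sum_length_filter_compl[of "\<lambda>i. i \<in> S" "[0..<s]"] by simp
    moreover have "length (filter (\<lambda>i. i \<in> S) [0..<s]) = card S"
      using sl fS by (metis length_sorted_list_of_set)
    ultimately show ?thesis using lr by simp
  qed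
  have nf: "\<And>r. r \<in> set rs \<Longrightarrow> \<not> is_flow r" using rG unfolding nonflow_subnetwork_def by auto
  have dfull: "distinct full"
  proof -
    have "inj_on ?out (set T)" by (auto intro: inj_onI unit_cplx_inj)
    then have "distinct (map ?out T)" by (simp add: distinct_map T_def)
    moreover have "set rs \<inter> set (map ?out T) = {}"
      using nf unfolding is_flow_def is_outflow_def by auto
    ultimately show ?thesis unfolding full_def using dr by simp
  qed
  have sfull: "set full \<subseteq> R"
  proof -
    have "set rs \<subseteq> R" using rG unfolding nonflow_subnetwork_def by auto
    moreover have "set (map ?out T) \<subseteq> R" using C unfolding CFSTR_def T_def by auto
    ultimately show ?thesis unfolding full_def by simp
  qed
  have ninf: "\<forall>r\<in>set full. \<not> is_inflow r"
    using nf unit_ne_zero unfolding full_def is_flow_def is_inflow_def by (auto simp: unit_ne_zero)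
  have "orientation [0..<s] full \<ge> 0"
    using J dfull sfull ninf lT unfolding jacobian_criterion_def full_def by auto
  moreover have "orientation [0..<s] full = orientation (filter (\<lambda>x. x \<notin> set T) [0..<s]) rs"
    unfolding full_def by (rule expand_outflows) (use lT in \<open>auto simp: T_def\<close>)
  moreover have "filter (\<lambda>x. x \<notin> set T) [0..<s] = sorted_list_of_set S"
    unfolding sl T_def by (rule filter_cong) auto
  ultimately show ?thesis using emb_orientation_eq[OF fS] by simp
qed


lemma sorted_del: "sorted sp \<Longrightarrow> distinct sp \<Longrightarrow> c < length sp \<Longrightarrow> sorted (del c sp)"
  using del_filter sorted_filter' by metis

lemma jac_from_emb:
  assumes H: "\<forall>S rs. sq_embedded_data s (nonflow_subnetwork R) S rs \<longrightarrow> emb_orientation S rs \<ge> 0"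
  shows "\<forall>rs sp. length rs = n \<longrightarrow> length sp = n \<longrightarrow> sorted sp \<longrightarrow> distinct sp \<longrightarrow> set sp \<subseteq> {..<s}
     \<longrightarrow> distinct rs \<longrightarrow> set rs \<subseteq> R \<longrightarrow> (\<forall>r\<in>set rs. \<not> is_inflow r) \<longrightarrow> orientation sp rs \<ge> 0"
proof (induction n rule: less_induct)
  case (less n)
  show ?case
  proof (intro allI impI)
    fix rs sp
    assume lr: "length rs = n" and ls: "length sp = n" and so: "sorted sp" and ds: "distinct sp"
      and ss: "set sp \<subseteq> {..<s}" and dr: "distinct rs" and sr: "set rs \<subseteq> R"
      and ni: "\<forall>r\<in>set rs. \<not> is_inflow r"
    show "orientation sp rs \<ge> 0"
    proof (cases "\<exists>r\<in>set rs. is_outflow r")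
      case True
      then obtain r where r: "r \<in> set rs" "is_outflow r" by blast
      then obtain i where ri: "r = (unit_cplx i, zero_cplx)" unfolding is_outflow_def by blast
      obtain k where k0: "k < length rs" and rk0: "rs ! k = r" using r(1) by (meson in_set_conv_nth)
      have k: "k < n" using k0 lr by simp
      have rk: "rs ! k = (unit_cplx i, zero_cplx)" using rk0 ri by simp
      show ?thesis
      proof (cases "i \<in> set sp")
        case True
        then obtain c where c0: "c < length sp" "sp ! c = i" by (meson in_set_conv_nth)
        then have c: "c < n" "sp ! c = i" using ls by auto
        have "orientation sp rs = sgn (int 1 * (int 1 - int 0)) * orientation (del c sp) (del k rs)"
        proof (rule orient_row[where n = n])
          fix b assume b: "b < n"
          have "fst (rs ! k) (sp ! b) = (if sp ! b = sp ! c then 1 else 0)"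
            using rk c(2) by (simp add: unit_cplx_at)
          also have "\<dots> = (if b = c then 1 else 0)"
            using nth_distinct_if[OF ds, of b c] b c(1) ls by simp
          finally show "fst (rs ! k) (sp ! b) = (if b = c then 1 else 0)" .
          show "snd (rs ! k) (sp ! b) = (if b = c then 0 else 0)"
            using rk by (simp add: zero_cplx_def)
        qed (use c k ls lr in auto)
        moreover have "orientation (del c sp) (del k rs) \<ge> 0"
        proof (rule less.IH[of "n - 1", rule_format])
          show "n - 1 < n" using k by simp
          show "sorted (del c sp)" using sorted_del[OF so ds] c ls by simp
          show "set (del c sp) \<subseteq> {..<s}" using ss set_del_subset[of c sp] by blast
          show "set (del k rs) \<subseteq> R" using sr set_del_subset[of k rs] by blast
          show "\<And>r. r \<in> set (del k rs) \<Longrightarrow> \<not> is_inflow r" using ni set_del_subset[of k rs] by blast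
          show "distinct (del c sp)" using distinct_del[OF ds] .
          show "distinct (del k rs)" using distinct_del[OF dr] .
          show "length (del k rs) = n - 1" using k lr by simp
          show "length (del c sp) = n - 1" using c ls by simp
        qed
        ultimately show ?thesis by simp
      next
        case False
        have "orientation sp rs = 0"
        proof (rule orient_zero_row[OF ls lr k])
          fix b assume "b < n"
          then have "sp ! b \<in> set sp" using ls by simp
          then have "sp ! b \<noteq> i" using False by auto
          then show "fst (rs ! k) (sp ! b) = 0" using rk by (simp add: unit_cplx_at)
        qed
        then show ?thesis by simp
      qed
    next
      case False
      have "set rs \<subseteq> nonflow_subnetwork R"
        using False ni sr unfolding nonflow_subnetwork_def is_flow_def by auto
      then have "sq_embedded_data s (nonflow_subnetwork R) (set sp) rs"
        unfolding sq_embedded_data_def using ss dr lr ls distinct_card[OF ds] by simp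
      then have "emb_orientation (set sp) rs \<ge> 0" using H by blast
      then show ?thesis using emb_orientation_eq[of "set sp" rs] sorted_list_of_set_id[OF so ds] by simp
    qed
  qed
qed


lemma nonneg_selfcat: "\<not> (1 \<le> (x::nat) \<and> x < y) \<Longrightarrow> 0 \<le> int x * (int x - int y)"
  by (cases "x = 0") auto

lemma emb_from_3:
  assumes nsc: "\<forall>r\<in>G. \<not> self_catalyzing r"
    and H3: "\<forall>S rs. sq_embedded_data s G S rs \<and> cond_a (emb_reactions S rs)
                     \<and> cond_b S (emb_reactions S rs) \<longrightarrow> emb_orientation S rs \<ge> 0"
  shows "\<forall>S rs. card S = n \<longrightarrow> sq_embedded_data s G S rs \<longrightarrow> emb_orientation S rs \<ge> 0"
proof (induction n rule: less_induct)
  case (less n)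
  show ?case
  proof (intro allI impI)
    fix S rs assume cS: "card S = n" and D: "sq_embedded_data s G S rs"
    have Ss: "S \<subseteq> {..<s}" and dr: "distinct rs" and rG: "set rs \<subseteq> G" and lr: "length rs = n"
      using D cS unfolding sq_embedded_data_def by auto
    have fS: "finite S" using Ss finite_subset by blast
    define sp where "sp = sorted_list_of_set S"
    have ls: "length sp = n" using cS fS sp_def by simp
    have ds: "distinct sp" "sorted sp" and setsp: "set sp = S" using fS by (simp_all add: sp_def)
    have spS: "sp ! b \<in> S" if b: "b < n" for b
    proof -
      have "sp ! b \<in> set sp" using ls b by simp
      then show ?thesis using setsp by simp
    qed
    have E: "emb_orientation S rs = orientation sp rs" using emb_orientation_eq[OF fS] sp_def by simp
    have idx: "\<exists>c<n. sp ! c = i" if iS: "i \<in> S" for i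
    proof -
      have "i \<in> set sp" using iS setsp by simp
      then obtain c where "c < length sp" "sp ! c = i" by (meson in_set_conv_nth)
      then show ?thesis using ls by auto
    qed
    have red: "orientation (del c sp) (del k rs) \<ge> 0" if k: "k < n" and c: "c < n" for k c
    proof -
      let ?i = "sp ! c"
      have dsp: "del c sp = sorted_list_of_set (S - {?i})"
      proof -
        have "del c sp = filter (\<lambda>x. x \<noteq> ?i) sp" using del_filter[OF ds(1)] c ls by simp
        moreover have "sorted_list_of_set (set (filter (\<lambda>x. x \<noteq> ?i) sp)) = filter (\<lambda>x. x \<noteq> ?i) sp"
          by (rule sorted_list_of_set_id) (use ds in \<open>auto intro: sorted_filter'\<close>)
        moreover have "set (filter (\<lambda>x. x \<noteq> ?i) sp) = S - {?i}" using setsp by auto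
        ultimately show ?thesis by simp
      qed
      have ci: "?i \<in> S" using spS c .
      have cS': "card (S - {?i}) = n - 1" using cS ci fS by simp
      have D': "sq_embedded_data s G (S - {?i}) (del k rs)"
        unfolding sq_embedded_data_def
        using Ss distinct_del[OF dr] set_del_subset[of k rs] rG cS' k lr by auto
      have lt: "card (S - {?i}) < n" using cS' k by simp
      have "emb_orientation (S - {?i}) (del k rs) \<ge> 0"
        using less.IH[OF lt, rule_format, OF refl D'] .
      moreover have "emb_orientation (S - {?i}) (del k rs) = orientation (del c sp) (del k rs)"
        using emb_orientation_eq[of "S - {?i}" "del k rs"] fS dsp by simp
      ultimately show ?thesis by simp
    qed
    let ?N = "emb_reactions S rs"
    have Nk: "?N ! k = restrict_reaction S (rs ! k)" if "k < n" for k
      using lr that by (simp add: emb_reactions_def)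
    have lN: "length ?N = n" using lr by (simp add: emb_reactions_def)
    show "emb_orientation S rs \<ge> 0"
    proof (cases "cond_a ?N \<and> cond_b S ?N")
      case True then show ?thesis using H3 D by blast
    next
      case False
      show ?thesis
      proof (cases "cond_a ?N")
        case False
        then obtain r where r: "r \<in> set ?N"
          and rc: "is_outflow r \<or> is_inflow r \<or> is_gen_inflow r \<or> is_mono_degradation r"
          unfolding cond_a_def by blast
        obtain k where k0: "k < length ?N" "?N ! k = r" using r by (meson in_set_conv_nth)
        have k: "k < n" using k0 lN by simp
        have rk: "r = restrict_reaction S (rs ! k)" using Nk[OF k] k0 by simp
        have fr: "fst (rs ! k) (sp ! b) = fst r (sp ! b)" if b: "b < n" for b
          using rk spS[OF b] by (simp add: restrict_fst)
        have sr: "snd (rs ! k) (sp ! b) = snd r (sp ! b)" if b: "b < n" for b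
          using rk spS[OF b] by (simp add: restrict_snd)
        have cases: "fst r = zero_cplx \<or> (\<exists>i a b. b \<le> a \<and> 0 < a \<and>
            fst r = (\<lambda>j. if j = i then a else 0) \<and> snd r = (\<lambda>j. if j = i then b else 0))"
        proof -
          consider "is_outflow r" | "is_inflow r" | "is_gen_inflow r" | "is_mono_degradation r"
            using rc by blast
          then show ?thesis
          proof cases
            case 1
            then obtain i where "r = (unit_cplx i, zero_cplx)" unfolding is_outflow_def by blast
            then have "fst r = (\<lambda>j. if j = i then 1 else 0) \<and> snd r = (\<lambda>j. if j = i then 0 else 0)"
              by (simp add: unit_cplx_def zero_cplx_def)
            then show ?thesis by blast
          next
            case 2
            then show ?thesis unfolding is_inflow_def by auto
          next
            case 3
            then show ?thesis unfolding is_gen_inflow_def by auto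
          next
            case 4
            then obtain i a b where h: "b \<le> a" "fst r = (\<lambda>j. if j = i then a else 0)"
              "snd r = (\<lambda>j. if j = i then b else 0)" unfolding is_mono_degradation_def by blast
            show ?thesis
            proof (cases "a = 0")
              case True
              then have "fst r = zero_cplx" using h by (simp add: zero_cplx_def fun_eq_iff)
              then show ?thesis by blast
            next
              case False
              then show ?thesis using h by blast
            qed
          qed
        qed
        then show ?thesis
        proof
          assume z: "fst r = zero_cplx"
          have "orientation sp rs = 0"
            by (rule orient_zero_row[OF ls lr k]) (simp add: fr z zero_cplx_def)
          then show ?thesis using E by simp
        next
          assume "\<exists>i a b. b \<le> a \<and> 0 < a \<and>
            fst r = (\<lambda>j. if j = i then a else 0) \<and> snd r = (\<lambda>j. if j = i then b else 0)"
          then obtain i a b where ab: "b \<le> a" "0 < a" and fa: "fst r = (\<lambda>j. if j = i then a else 0)"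
            and fb: "snd r = (\<lambda>j. if j = i then b else 0)" by blast
          have iS: "i \<in> S"
          proof (rule ccontr)
            assume "i \<notin> S"
            then have "fst r i = 0" using rk by (simp add: restrict_reaction_def)
            then show False using fa ab by simp
          qed
          obtain c where c: "c < n" "sp ! c = i" using idx[OF iS] by blast
          have "orientation sp rs = sgn (int a * (int a - int b)) * orientation (del c sp) (del k rs)"
          proof (rule orient_row[OF ls lr k c(1)])
            fix b' assume b': "b' < n"
            have "fst (rs ! k) (sp ! b') = (if sp ! b' = sp ! c then a else 0)"
              using fr[OF b'] fa c(2) by simp
            also have "\<dots> = (if b' = c then a else 0)"
              using nth_distinct_if[OF ds(1), of b' c] b' c(1) ls by simp
            finally show "fst (rs ! k) (sp ! b') = (if b' = c then a else 0)" .
            have "snd (rs ! k) (sp ! b') = (if sp ! b' = sp ! c then b else 0)"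
              using sr[OF b'] fb c(2) by simp
            also have "\<dots> = (if b' = c then b else 0)"
              using nth_distinct_if[OF ds(1), of b' c] b' c(1) ls by simp
            finally show "snd (rs ! k) (sp ! b') = (if b' = c then b else 0)" .
          qed
          moreover have "int a * (int a - int b) \<ge> 0" using ab by simp
          ultimately show ?thesis using E red[OF k c(1)] sgn_nonneg_mult by simp
        qed
      next
        case True
        with False have nb: "\<not> cond_b S ?N" by simp
        define P where "P i = {{fst r, snd r} | r. r \<in> set ?N \<and> (0 < fst r i \<or> 0 < snd r i)}" for i
        obtain i where iS: "i \<in> S" and lt: "card (P i) < 2"
          using nb unfolding cond_b_def P_def by (auto simp: not_le)
        have "P i \<subseteq> (\<lambda>r. {fst r, snd r}) ` set ?N" unfolding P_def by blast
        then have fP: "finite (P i)" using finite_subset by blast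
        have P1: "p = q" if "p \<in> P i" "q \<in> P i" for p q
          using card_le_Suc0_iff_eq[OF fP] lt that by auto
        obtain c where c: "c < n" "sp ! c = i" using idx[OF iS] by blast
        define app where "app k \<longleftrightarrow> 0 < fst (rs ! k) i \<or> 0 < snd (rs ! k) i" for k
        have inP: "{fst (?N ! k), snd (?N ! k)} \<in> P i" if k: "k < n" and ak: "app k" for k
        proof -
          have mem: "?N ! k \<in> set ?N" using k lN by simp
          have "0 < fst (?N ! k) i \<or> 0 < snd (?N ! k) i"
            using ak Nk[OF k] iS unfolding app_def by (simp add: restrict_fst restrict_snd)
          then show ?thesis unfolding P_def using mem by blast
        qed
        have rowS: "fst (?N ! k) (sp ! b) = fst (rs ! k) (sp ! b) \<and> snd (?N ! k) (sp ! b) = snd (rs ! k) (sp ! b)"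
          if k: "k < n" and b: "b < n" for k b
          using Nk[OF k] spS[OF b] by (simp add: restrict_fst restrict_snd)
        show ?thesis
        proof (cases "\<exists>k1 k2. k1 < n \<and> k2 < n \<and> k1 \<noteq> k2 \<and> app k1 \<and> app k2")
          case True
          then obtain k1 k2 where kk: "k1 < n" "k2 < n" "k1 \<noteq> k2" "app k1" "app k2" by blast
          have "{fst (?N!k1), snd (?N!k1)} = {fst (?N!k2), snd (?N!k2)}"
            using P1[OF inP[OF kk(1) kk(4)] inP[OF kk(2) kk(5)]] .
          then have "(fst (?N!k1) = fst (?N!k2) \<and> snd (?N!k1) = snd (?N!k2))
              \<or> (fst (?N!k1) = snd (?N!k2) \<and> snd (?N!k1) = fst (?N!k2))"
            by (simp add: doubleton_eq_iff)
          then have "orientation sp rs = 0"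
          proof
            assume h: "fst (?N!k1) = fst (?N!k2) \<and> snd (?N!k1) = snd (?N!k2)"
            show ?thesis
            proof (rule orient_eq_rows[OF ls lr kk(1) kk(2) kk(3)])
              fix b assume b: "b < n"
              show "fst (rs ! k1) (sp ! b) = fst (rs ! k2) (sp ! b)"
                using h rowS[OF kk(1) b] rowS[OF kk(2) b] by metis
            qed
          next
            assume h: "fst (?N!k1) = snd (?N!k2) \<and> snd (?N!k1) = fst (?N!k2)"
            show ?thesis
            proof (rule orient_rev_rows[OF ls lr kk(1) kk(2) kk(3)])
              fix b assume b: "b < n"
              show "fst (rs ! k1) (sp ! b) = snd (rs ! k2) (sp ! b)"
                using h rowS[OF kk(1) b] rowS[OF kk(2) b] by metis
              show "snd (rs ! k1) (sp ! b) = fst (rs ! k2) (sp ! b)"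
                using h rowS[OF kk(1) b] rowS[OF kk(2) b] by metis
            qed
          qed
          then show ?thesis using E by simp
        next
          case False
          show ?thesis
          proof (cases "\<exists>k<n. app k")
            case True
            then obtain k where k: "k < n" "app k" by blast
            have oth: "fst (rs ! b) (sp ! c) = 0 \<and> snd (rs ! b) (sp ! c) = 0"
              if bn: "b < n" "b \<noteq> k" for b
            proof -
              have "\<not> app b"
              proof
                assume "app b"
                then have "\<exists>k1 k2. k1 < n \<and> k2 < n \<and> k1 \<noteq> k2 \<and> app k1 \<and> app k2"
                  using k bn by blast
                then show False using False by blast
              qed
              then show ?thesis using c(2) unfolding app_def by simp
            qed
            have "orientation sp rs = sgn (int (fst (rs ! k) (sp ! c)) *
                (int (fst (rs ! k) (sp ! c)) - int (snd (rs ! k) (sp ! c)))) * orientation (del c sp) (del k rs)"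
              by (rule orient_col[OF ls lr k(1) c(1) oth])
            moreover have "rs ! k \<in> set rs" using k lr by simp
            then have "rs ! k \<in> G" using rG by blast
            then have "\<not> self_catalyzing (rs ! k)" using nsc by blast
            then have "\<not> (1 \<le> fst (rs ! k) (sp ! c) \<and> fst (rs ! k) (sp ! c) < snd (rs ! k) (sp ! c))"
              unfolding self_catalyzing_def by blast
            then have "0 \<le> int (fst (rs ! k) (sp ! c)) * (int (fst (rs ! k) (sp ! c)) - int (snd (rs ! k) (sp ! c)))"
              by (rule nonneg_selfcat)
            ultimately show ?thesis using E red[OF k(1) c(1)] sgn_nonneg_mult by simp
          next
            case False
            have "orientation sp rs = 0"
              by (rule orient_zero_col[OF ls lr c(1)]) (use False c(2) in \<open>auto simp: app_def\<close>)
            then show ?thesis using E by simp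
          qed
        qed
      qed
    qed
  qed
qed


lemma selfcat_neg:
  assumes net: "reaction_network s R" and rR: "r \<in> R" and sc: "self_catalyzing r"
  obtains j where "j < s" "emb_orientation {j} [r] < 0"
proof -
  obtain j where j: "1 \<le> fst r j" "fst r j < snd r j" using sc unfolding self_catalyzing_def by blast
  have js: "j < s"
  proof (rule ccontr)
    assume "\<not> j < s"
    then have "fst r j = 0" using net rR unfolding reaction_network_def by auto
    then show False using j by simp
  qed
  have "emb_orientation {j} [r] = orientation [j] [r]" using emb_orientation_eq[of "{j}" "[r]"] by simp
  also have "\<dots> = sgn (int (fst r j) * (int (fst r j) - int (snd r j)))"
  proof -
    have "det (reactant_matrix [j] [r]) = int (fst r j)"
      by (subst det_single) (auto simp: reactant_matrix_def)
    moreover have "det (reaction_matrix [j] [r]) = int (fst r j) - int (snd r j)"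
      by (subst det_single) (auto simp: reaction_matrix_def)
    ultimately show ?thesis unfolding orientation_def by simp
  qed
  also have "\<dots> < 0"
  proof -
    have "int (fst r j) * (int (fst r j) - int (snd r j)) < 0" using j by (simp add: mult_pos_neg)
    then show ?thesis by simp
  qed
  finally show thesis using that js by blast
qed

theorem mainTheorem3:
  fixes s :: nat and R :: "reaction set"
  assumes "CFSTR s R"
  defines "G \<equiv> nonflow_subnetwork R"
  shows "(jacobian_criterion s R \<longleftrightarrow>
            (\<forall>S rs. sq_embedded_data s G S rs \<longrightarrow> emb_orientation S rs \<ge> 0))
       \<and> (jacobian_criterion s R \<longleftrightarrow>
            ((\<forall>r\<in>G. \<not> self_catalyzing r) \<and>
             (\<forall>S rs. sq_embedded_data s G S rs \<and> cond_a (emb_reactions S rs)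
                     \<and> cond_b S (emb_reactions S rs) \<longrightarrow> emb_orientation S rs \<ge> 0)))"
proof -
  have net: "reaction_network s R" using assms(1) unfolding CFSTR_def by simp
  have GR: "G \<subseteq> R" unfolding G_def nonflow_subnetwork_def by auto
  let ?P2 = "\<forall>S rs. sq_embedded_data s G S rs \<longrightarrow> emb_orientation S rs \<ge> 0"
  let ?P3 = "(\<forall>r\<in>G. \<not> self_catalyzing r) \<and>
             (\<forall>S rs. sq_embedded_data s G S rs \<and> cond_a (emb_reactions S rs)
                     \<and> cond_b S (emb_reactions S rs) \<longrightarrow> emb_orientation S rs \<ge> 0)"
  have 12: "jacobian_criterion s R \<longleftrightarrow> ?P2"
  proof
    assume J: "jacobian_criterion s R"
    show ?P2 unfolding G_def using emb_from_jac[OF assms(1) J] by blast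
  next
    assume H: ?P2
    have H': "\<forall>S rs. sq_embedded_data s (nonflow_subnetwork R) S rs \<longrightarrow> emb_orientation S rs \<ge> 0"
      using H unfolding G_def .
    show "jacobian_criterion s R" unfolding jacobian_criterion_def
    proof (intro allI impI)
      fix rs assume h: "distinct rs \<and> length rs = s \<and> set rs \<subseteq> R \<and> (\<forall>r\<in>set rs. \<not> is_inflow r)"
      show "orientation [0..<s] rs \<ge> 0"
        using jac_from_emb[OF H', of s, rule_format, of rs "[0..<s]"] h by (auto simp: atLeast0LessThan)
    qed
  qed
  have 23: "?P2 \<longleftrightarrow> ?P3"
  proof
    assume H: ?P2
    show ?P3
    proof (intro conjI)
      show "\<forall>r\<in>G. \<not> self_catalyzing r"
      proof (intro ballI notI)
        fix r assume rG: "r \<in> G" and sc: "self_catalyzing r"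
        have rR: "r \<in> R" using rG GR by blast
        obtain j where js: "j < s" and neg: "emb_orientation {j} [r] < 0"
          using selfcat_neg[OF net rR sc] by blast
        have "sq_embedded_data s G {j} [r]" unfolding sq_embedded_data_def using js rG by simp
        then have "emb_orientation {j} [r] \<ge> 0" using H by blast
        then show False using neg by simp
      qed
      show "\<forall>S rs. sq_embedded_data s G S rs \<and> cond_a (emb_reactions S rs)
                     \<and> cond_b S (emb_reactions S rs) \<longrightarrow> emb_orientation S rs \<ge> 0"
        using H by blast
    qed
  next
    assume H: ?P3
    show ?P2
    proof (intro allI impI)
      fix S rs assume D: "sq_embedded_data s G S rs"
      show "emb_orientation S rs \<ge> 0"
        using emb_from_3[OF conjunct1[OF H] conjunct2[OF H], rule_format, OF refl D] .
    qed
  qed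
  show ?thesis using 12 23 by blast
qed

end
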